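(* The variety $\mathcal{V}_{\sigma\ell\mathbb{G}}$ is generated by $\mathbb{R}$: every $G\in\mathcal{V}_{\sigma\ell\mathbb{G}}$ is isomorphic to a subalgebra of a homomorphic image (quotient) of a power of the algebra $(\mathbb{R},0,+,-,\vee,\wedge,\bigvee^-)$, where in $\mathbb{R}$ one sets $\bigvee^-(g,f_1,f_2,\dots)=\sup_{n\ge1}\{f_n\wedge g\}$. In particular $\mathcal{V}_{\sigma\ell\mathbb{G}}$ is the class of all algebras in its language satisfying every equation true in $\mathbb{R}$.
   Context: $\mathcal{V}_{\sigma\ell\mathbb{G}}$ is the infinitary variety of algebras $(G,0,+,-,\vee,\wedge,\bigvee^-)$, $\bigvee^-$ of countably infinite arity with $\bigvee_{n\ge1}^g f_n:=\bigvee^-(g,f_1,f_2,\dots)$, satisfying the $\ell$-group axioms and (A1) $\bigvee_{n\ge1}^g f_n=\bigvee_{n\ge1}^g(f_n\wedge g)$; (A2) $\bigvee_{n\ge1}^g f_n=(f_1\wedge g)\vee\bigvee^-(g,f_2,f_3,\dots)$; (A3) $\bigvee_{n\ge1}^g(f_n\wedge h)\le h$ ($a\le b$ meaning $a\wedge b=a$). Morphisms preserve all operations. *)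

theory Defs
  imports Main "HOL.Real"
begin

text \<open>The infinitary operation bigvee-minus(g, f_1, f_2, ...) is represented by
  sbv g f with f 0 = f_1, f 1 = f_2, etc.  The carrier is the whole type.\<close>

record 'a sl_alg =
  szero :: 'a
  splus :: "'a \<Rightarrow> 'a \<Rightarrow> 'a"
  sneg  :: "'a \<Rightarrow> 'a"
  sjoin :: "'a \<Rightarrow> 'a \<Rightarrow> 'a"
  smeet :: "'a \<Rightarrow> 'a \<Rightarrow> 'a"
  sbv   :: "'a \<Rightarrow> (nat \<Rightarrow> 'a) \<Rightarrow> 'a"

definition sle :: "'a sl_alg \<Rightarrow> 'a \<Rightarrow> 'a \<Rightarrow> bool" where
  "sle A a b \<longleftrightarrow> smeet A a b = a"

definition lgroup_axioms :: "'a sl_alg \<Rightarrow> bool" where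
  "lgroup_axioms A \<longleftrightarrow>
     (\<forall>x y z. splus A (splus A x y) z = splus A x (splus A y z)) \<and>
     (\<forall>x y. splus A x y = splus A y x) \<and>
     (\<forall>x. splus A (szero A) x = x) \<and>
     (\<forall>x. splus A (sneg A x) x = szero A) \<and>
     (\<forall>x y z. sjoin A (sjoin A x y) z = sjoin A x (sjoin A y z)) \<and>
     (\<forall>x y z. smeet A (smeet A x y) z = smeet A x (smeet A y z)) \<and>
     (\<forall>x y. sjoin A x y = sjoin A y x) \<and>
     (\<forall>x y. smeet A x y = smeet A y x) \<and>
     (\<forall>x y. sjoin A x (smeet A x y) = x) \<and>
     (\<forall>x y. smeet A x (sjoin A x y) = x) \<and>
     (\<forall>x y z. splus A x (sjoin A y z) = sjoin A (splus A x y) (splus A x z)) \<and>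
     (\<forall>x y z. splus A x (smeet A y z) = smeet A (splus A x y) (splus A x z))"

definition in_V_slG :: "'a sl_alg \<Rightarrow> bool" where
  "in_V_slG A \<longleftrightarrow> lgroup_axioms A \<and>
     (\<forall>g f. sbv A g f = sbv A g (\<lambda>n. smeet A (f n) g)) \<and>
     (\<forall>g f. sbv A g f = sjoin A (smeet A (f 0) g) (sbv A g (\<lambda>n. f (Suc n)))) \<and>
     (\<forall>g h f. sle A (sbv A g (\<lambda>n. smeet A (f n) h)) h)"

definition real_alg :: "real sl_alg" where
  "real_alg = \<lparr> szero = 0, splus = (+), sneg = uminus, sjoin = max, smeet = min,
                sbv = (\<lambda>g f. SUP n. min (f n) g) \<rparr>"

definition power_alg :: "('i \<Rightarrow> real) sl_alg" where
  "power_alg = \<lparr> szero = (\<lambda>i. 0),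
                 splus = (\<lambda>x y i. x i + y i),
                 sneg = (\<lambda>x i. - x i),
                 sjoin = (\<lambda>x y i. max (x i) (y i)),
                 smeet = (\<lambda>x y i. min (x i) (y i)),
                 sbv = (\<lambda>g f i. SUP n. min (f n i) (g i)) \<rparr>"

definition congruence :: "'a sl_alg \<Rightarrow> ('a \<Rightarrow> 'a \<Rightarrow> bool) \<Rightarrow> bool" where
  "congruence A \<theta> \<longleftrightarrow> equivp \<theta> \<and>
     (\<forall>x x' y y'. \<theta> x x' \<and> \<theta> y y' \<longrightarrow> \<theta> (splus A x y) (splus A x' y')) \<and>
     (\<forall>x x'. \<theta> x x' \<longrightarrow> \<theta> (sneg A x) (sneg A x')) \<and>
     (\<forall>x x' y y'. \<theta> x x' \<and> \<theta> y y' \<longrightarrow> \<theta> (sjoin A x y) (sjoin A x' y')) \<and>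
     (\<forall>x x' y y'. \<theta> x x' \<and> \<theta> y y' \<longrightarrow> \<theta> (smeet A x y) (smeet A x' y')) \<and>
     (\<forall>g g' f f'. \<theta> g g' \<and> (\<forall>n. \<theta> (f n) (f' n)) \<longrightarrow> \<theta> (sbv A g f) (sbv A g' f'))"

text \<open>e represents (via chosen representatives) an injective homomorphism from G
  into the quotient algebra B/theta; equivalently G is isomorphic to a subalgebra
  (the image) of the homomorphic image B/theta.\<close>
definition embeds_into_quotient ::
  "'a sl_alg \<Rightarrow> 'b sl_alg \<Rightarrow> ('b \<Rightarrow> 'b \<Rightarrow> bool) \<Rightarrow> ('a \<Rightarrow> 'b) \<Rightarrow> bool" where
  "embeds_into_quotient G B \<theta> e \<longleftrightarrow>
     (\<forall>x y. \<theta> (e x) (e y) \<longleftrightarrow> x = y) \<and>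
     \<theta> (e (szero G)) (szero B) \<and>
     (\<forall>x y. \<theta> (e (splus G x y)) (splus B (e x) (e y))) \<and>
     (\<forall>x. \<theta> (e (sneg G x)) (sneg B (e x))) \<and>
     (\<forall>x y. \<theta> (e (sjoin G x y)) (sjoin B (e x) (e y))) \<and>
     (\<forall>x y. \<theta> (e (smeet G x y)) (smeet B (e x) (e y))) \<and>
     (\<forall>g f. \<theta> (e (sbv G g f)) (sbv B (e g) (\<lambda>n. e (f n))))"

end

theory Submission
  imports Defs "HOL-Library.Lattice_Algebras" "HOL-Library.Countable_Set"
begin


class slg = lattice_ab_group_add +
  fixes sv :: "'a \<Rightarrow> (nat \<Rightarrow> 'a) \<Rightarrow> 'a"
  assumes sv_upper: "inf (f n) g \<le> sv g f"
  and sv_least: "(\<And>n. inf (f n) g \<le> h) \<Longrightarrow> sv g f \<le> h"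
begin

lemma my_add_diff_add: "(a + c) - (b + d) = (a - b) + (c - d)"
  by (simp add: algebra_simps)

lemma my_diff_diff: "(a - b) - (c - d) = (a + d) - (b + c)"
  by (simp add: algebra_simps)

lemma my_minus_cancel: "a - (a + k) = - k"
  by (simp add: algebra_simps)

lemma pprt_disj: "inf (pprt x) (pprt (- x)) = 0"
proof -
  have 1: "pprt (- x) = pprt x + - x"
    unfolding pprt_def add_sup_distrib_right by (simp add: sup_commute)
  have "inf (pprt x) (pprt x + - x) = pprt x + inf 0 (- x)"
    by (simp add: add_inf_distrib_left)
  also have "inf 0 (- x) = - pprt x"
    unfolding pprt_def neg_sup_eq_inf by (simp add: inf_commute)
  finally show ?thesis using 1 by simp
qed

lemma riesz: "0 \<le> c \<Longrightarrow> 0 \<le> u \<Longrightarrow> 0 \<le> v \<Longrightarrow> inf c (u + v) \<le> inf c u + inf c v"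
proof -
  assume c: "0 \<le> c" and u: "0 \<le> u" and v: "0 \<le> v"
  have e: "inf c u + inf c v = inf (inf (c + c) (u + c)) (inf (c + v) (u + v))"
    by (simp only: add_inf_distrib_left add_inf_distrib_right)
  have "c \<le> c + c" using add_increasing c by blast
  moreover have "c \<le> c + v" using v by (simp add: add_increasing2)
  moreover have "c \<le> u + c" using u by (simp add: add_increasing)
  ultimately have "inf c (u + v) \<le> inf (inf (c + c) (u + c)) (inf (c + v) (u + v))"
    by (simp add: le_infI1 le_infI2)
  then show ?thesis using e by simp
qed

primrec nm :: "nat \<Rightarrow> 'a \<Rightarrow> 'a" where
  "nm 0 x = 0" | "nm (Suc n) x = x + nm n x"

lemma nm_nonneg: "0 \<le> x \<Longrightarrow> 0 \<le> nm n x"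
  by (induct n) (simp_all add: add_nonneg_nonneg)

lemma nm_mono: "x \<le> y \<Longrightarrow> nm n x \<le> nm n y"
  by (induct n) (simp_all add: add_mono)

lemma nm_add: "nm (m + n) x = nm m x + nm n x"
  by (induct m) (simp_all add: add.assoc)

lemma nm_distrib: "nm n (x + y) = nm n x + nm n y"
proof (induct n)
  case (Suc n) then show ?case by (simp add: add.assoc add.left_commute)
qed simp

lemma nm_minus: "nm n (- x) = - nm n x"
proof (induct n)
  case (Suc n) then show ?case by (simp add: minus_add_distrib)
qed simp

lemma nm_diff: "nm n (x - y) = nm n x - nm n y"
  unfolding diff_conv_add_uminus by (simp only: nm_distrib nm_minus)

lemma nm_mult: "nm (m * n) x = nm m (nm n x)"
  by (induct m) (simp_all add: nm_add)

lemma nm_zero[simp]: "nm n 0 = 0"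
  by (induct n) simp_all

lemma nm_one[simp]: "nm 1 x = x" by simp

lemma disj_nm:
  assumes a: "0 \<le> a" and b: "0 \<le> b" and ab: "inf a b = 0"
  shows "inf a (nm m b) = 0"
proof (induct m)
  case 0 show ?case unfolding nm.simps using a by (rule inf_absorb2)
next
  case (Suc m)
  have "inf a (b + nm m b) \<le> inf a b + inf a (nm m b)"
    by (rule riesz[OF a b nm_nonneg[OF b]])
  then have "inf a (nm (Suc m) b) \<le> 0" by (simp only: Suc ab nm.simps add_0_left)
  moreover have "0 \<le> inf a (nm (Suc m) b)" using a nm_nonneg[OF b, of "Suc m"] by (rule le_infI)
  ultimately show ?case by (rule order.antisym)
qed

definition zm :: "int \<Rightarrow> 'a \<Rightarrow> 'a" where
  "zm i x = nm (nat i) x - nm (nat (- i)) x"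

lemma zm_key: "zm (int a - int b) x = nm a x - nm b x"
proof (cases "b \<le> a")
  case True
  then obtain k where a: "a = b + k" using le_Suc_ex by blast
  then have "int a - int b = int k" by simp
  then have "zm (int a - int b) x = nm k x" by (simp add: zm_def)
  moreover have "nm a x - nm b x = nm k x" unfolding a nm_add by (rule add_diff_cancel_left')
  ultimately show ?thesis by simp
next
  case False
  then obtain k where b: "b = a + k" using le_Suc_ex nat_le_linear by blast
  then have "int a - int b = - int k" by simp
  then have "zm (int a - int b) x = - nm k x" by (simp add: zm_def)
  moreover have "nm a x - nm b x = - nm k x" unfolding b nm_add by (rule my_minus_cancel)
  ultimately show ?thesis by simp
qed

lemma int_split: obtains a b where "(i::int) = int a - int b"
proof
  show "i = int (nat i) - int (nat (- i))" by simp
qed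

lemma zm_add: "zm (i + j) x = zm i x + zm j x"
proof -
  obtain a b where i: "i = int a - int b" by (rule int_split)
  obtain c e where j: "j = int c - int e" by (rule int_split)
  have "i + j = int (a + c) - int (b + e)" using i j by simp
  then have "zm (i + j) x = nm (a + c) x - nm (b + e) x" by (simp only: zm_key)
  then show ?thesis unfolding i j zm_key by (simp only: nm_add my_add_diff_add)
qed

lemma zm_mult: "zm (i * j) x = zm i (zm j x)"
proof -
  obtain a b where i: "i = int a - int b" by (rule int_split)
  obtain c e where j: "j = int c - int e" by (rule int_split)
  have "i * j = int (a * c + b * e) - int (a * e + b * c)" unfolding i j by (simp add: algebra_simps)
  then have "zm (i * j) x = nm (a * c + b * e) x - nm (a * e + b * c) x" by (simp only: zm_key)
  moreover have "zm (int a - int b) (zm (int c - int e) x) = (nm a (nm c x) + nm b (nm e x)) - (nm a (nm e x) + nm b (nm c x))"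
  proof -
    have "zm (int a - int b) (zm (int c - int e) x) = (nm a (nm c x) - nm a (nm e x)) - (nm b (nm c x) - nm b (nm e x))"
      by (simp only: zm_key nm_diff)
    also have "\<dots> = (nm a (nm c x) + nm b (nm e x)) - (nm a (nm e x) + nm b (nm c x))"
      by (rule my_diff_diff)
    finally show ?thesis .
  qed
  ultimately show ?thesis unfolding i j by (simp only: nm_add nm_mult)
qed

lemma zm_distrib: "zm i (x + y) = zm i x + zm i y"
  by (simp only: zm_def nm_distrib my_add_diff_add)

lemma zm_int[simp]: "zm (int n) x = nm n x"
  by (simp add: zm_def)

lemma zm_neg: "zm (- i) x = - zm i x"
  by (simp add: zm_def)

lemma zm_zero[simp]: "zm 0 x = 0" by (simp add: zm_def)
lemma zm_one[simp]: "zm 1 x = x" by (simp add: zm_def)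

lemma zm_nm: "nm n (zm i x) = zm (int n * i) x"
  by (simp add: zm_mult)

lemma zm_mono_left: "0 \<le> x \<Longrightarrow> i \<le> j \<Longrightarrow> zm i x \<le> zm j x"
proof -
  assume x: "0 \<le> x" and ij: "i \<le> j"
  have "zm j x = zm (i + (j - i)) x" by simp
  also have "\<dots> = zm i x + zm (j - i) x" by (rule zm_add)
  finally have 1: "zm j x = zm i x + zm (j - i) x" .
  have "zm (j - i) x = nm (nat (j - i)) x" using ij by (simp add: zm_def)
  then show ?thesis using 1 nm_nonneg[OF x] by (simp add: add_increasing2)
qed


lemma disj_le: "0 \<le> u' \<Longrightarrow> 0 \<le> v' \<Longrightarrow> u' \<le> u \<Longrightarrow> v' \<le> v \<Longrightarrow> inf u v = 0 \<Longrightarrow> inf u' v' = 0"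
proof -
  assume a: "0 \<le> u'" "0 \<le> v'" "u' \<le> u" "v' \<le> v" "inf u v = 0"
  have "inf u' v' \<le> inf u v" using a(3,4) by (rule inf_mono)
  moreover have "0 \<le> inf u' v'" using a(1,2) by (rule le_infI)
  ultimately show ?thesis using a(5) by (simp add: order.antisym)
qed

lemma archimedean: assumes c: "0 \<le> c" and w: "\<And>m. nm m c \<le> w" shows "c \<le> 0"
proof -
  define s where "s = sv w (\<lambda>m. nm m c)"
  have eq: "inf (nm m c) w = nm m c" for m using w by (rule inf_absorb1)
  have up: "nm m c \<le> s" for m using sv_upper[of "\<lambda>m. nm m c" m w] unfolding s_def eq .
  have "s \<le> s - c" unfolding s_def
  proof (rule sv_least)
    fix n
    have "c + nm n c \<le> s" using up[of "Suc n"] by simp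
    then show "inf (nm n c) w \<le> sv w (\<lambda>m. nm m c) - c" unfolding eq s_def
      by (simp add: le_diff_eq add.commute)
  qed
  then show ?thesis by (simp add: le_diff_eq)
qed

primrec Fm :: "'a \<Rightarrow> (nat \<Rightarrow> 'a) \<Rightarrow> nat \<Rightarrow> 'a" where
  "Fm g f 0 = inf (f 0) g"
| "Fm g f (Suc k) = sup (Fm g f k) (inf (f (Suc k)) g)"

lemma Fm_upper: "inf (f k) g \<le> Fm g f k"
  by (cases k) simp_all

lemma Fm_mono: "k \<le> k' \<Longrightarrow> Fm g f k \<le> Fm g f k'"
proof (induct k' rule: dec_induct)
  case (step n) then show ?case by (simp add: le_supI1)
qed simp

lemma Fm_le_sv: "Fm g f k \<le> sv g f"
  by (induct k) (simp_all add: sv_upper)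

lemma sv_le_Fm: "(\<And>k. Fm g f k \<le> h) \<Longrightarrow> sv g f \<le> h"
  by (rule sv_least) (rule order.trans[OF Fm_upper])

lemma sup_mult: "(\<And>k. nm M (Fm g f k) \<le> t) \<Longrightarrow> nm M (sv g f) \<le> t"
proof (induct M arbitrary: t)
  case 0 then show ?case by simp
next
  case (Suc M)
  have "nm M (Fm g f k0) \<le> t - sv g f" for k0
  proof -
    have "sv g f \<le> t - nm M (Fm g f k0)"
    proof (rule sv_le_Fm)
      fix n
      define K where "K = max n k0"
      have "Fm g f n + nm M (Fm g f k0) \<le> Fm g f K + nm M (Fm g f K)"
        by (rule add_mono) (auto simp: K_def intro!: Fm_mono nm_mono)
      also have "\<dots> \<le> t" using Suc(2)[of K] by simp
      finally show "Fm g f n \<le> t - nm M (Fm g f k0)" by (simp add: le_diff_eq)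
    qed
    then show ?thesis by (simp add: le_diff_eq add.commute)
  qed
  then have "nm M (sv g f) \<le> t - sv g f" by (rule Suc(1))
  then show ?case by (simp add: le_diff_eq add.commute)
qed

definition Pc :: "'a \<Rightarrow> 'a \<Rightarrow> bool" where
  "Pc d c \<longleftrightarrow> 0 \<le> c \<and> c \<noteq> 0 \<and> c \<le> d"

lemma step1: assumes "Pc d c"
  shows "\<exists>c'. Pc d c' \<and> c' \<le> c \<and> (inf c' (pprt (- a)) = 0 \<or> inf c' (pprt a) = 0)"
proof (cases "inf c (pprt a) = 0")
  case True then show ?thesis using assms by blast
next
  case False
  define c' where "c' = inf c (pprt a)"
  have c0: "0 \<le> c" and cd: "c \<le> d" using assms by (auto simp: Pc_def)
  have "Pc d c'" unfolding Pc_def c'_def using False c0 cd by (auto intro: le_infI1)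
  moreover have "c' \<le> c" by (simp add: c'_def)
  moreover have "inf c' (pprt (- a)) = 0"
    by (rule disj_le[OF _ _ _ order.refl pprt_disj]) (auto simp: c'_def c0)
  ultimately show ?thesis by blast
qed

lemma step2: assumes P: "Pc d c" and w: "0 \<le> w"
  shows "\<exists>c' M. Pc d c' \<and> c' \<le> c \<and> inf c' (pprt (w - nm M d)) = 0"
proof (cases "\<exists>m. pprt (c - pprt (w - nm m d)) \<noteq> 0")
  case True
  then obtain m where m: "pprt (c - pprt (w - nm m d)) \<noteq> 0" by blast
  define u where "u = pprt (w - nm m d)"
  define c' where "c' = pprt (c - u)"
  have c0: "0 \<le> c" and cd: "c \<le> d" and cne: "c \<noteq> 0" using P by (auto simp: Pc_def)
  have u0: "0 \<le> u" by (simp add: u_def)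
  have c'c: "c' \<le> c" unfolding c'_def pprt_def using u0 c0 by (simp add: diff_le_eq)
  have "Pc d c'" unfolding Pc_def using m c'c cd by (auto simp: c'_def u_def)
  moreover have "inf c' (pprt (w - nm (Suc m) d)) = 0"
  proof (rule disj_le[OF _ _ _ _ pprt_disj[of "d - u"]])
    show "c' \<le> pprt (d - u)" unfolding c'_def using cd by (simp add: diff_right_mono pprt_mono)
    have "w - nm (Suc m) d \<le> - (d - u)"
    proof -
      have "w - nm m d \<le> u" by (simp add: u_def pprt_def)
      then show ?thesis by (simp add: le_diff_eq diff_le_eq algebra_simps)
    qed
    then show "pprt (w - nm (Suc m) d) \<le> pprt (- (d - u))" by (rule pprt_mono)
  qed (auto simp: c'_def)
  ultimately show ?thesis using c'c by blast
next
  case False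
  then have cu: "c \<le> pprt (w - nm m d)" for m by (auto simp: le_zero_iff_zero_pprt[symmetric])
  have c0: "0 \<le> c" and cd: "c \<le> d" and cne: "c \<noteq> 0" using P by (auto simp: Pc_def)
  have "nm m c \<le> w" for m
  proof -
    define z where "z = pprt (nm m c - w)"
    have "inf (pprt (nm m d - w)) (nm m (pprt (w - nm m d))) = 0"
      by (rule disj_nm) (auto simp: inf_commute pprt_disj[of "w - nm m d", simplified])
    moreover have "z \<le> pprt (nm m d - w)" unfolding z_def
      by (rule pprt_mono) (simp add: diff_right_mono nm_mono cd)
    moreover have "z \<le> nm m (pprt (w - nm m d))"
    proof -
      have "z \<le> pprt (nm m c)" unfolding z_def using w by (intro pprt_mono) (simp add: diff_le_eq)
      also have "\<dots> = nm m c" using nm_nonneg[OF c0] by simp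
      also have "\<dots> \<le> nm m (pprt (w - nm m d))" using cu by (rule nm_mono)
      finally show ?thesis .
    qed
    ultimately have "z \<le> 0" by (metis le_infI)
    then have "nm m c - w \<le> 0" unfolding z_def pprt_def using sup_ge1 order.trans by blast
    then show ?thesis by simp
  qed
  then have "c \<le> 0" by (rule archimedean[OF c0])
  then show ?thesis using c0 cne by (simp add: order.antisym)
qed

lemma step3: assumes P: "Pc d c" and b: "0 \<le> b" and nb: "\<not> c \<le> b"
  shows "\<exists>c'. Pc d c' \<and> c' \<le> c \<and> inf c' (pprt (b - d)) = 0"
proof -
  define c' where "c' = pprt (c - b)"
  have c0: "0 \<le> c" and cd: "c \<le> d" using P by (auto simp: Pc_def)
  have c'c: "c' \<le> c" unfolding c'_def pprt_def using b c0 by (simp add: diff_le_eq)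
  have "c' \<noteq> 0" unfolding c'_def using nb by (simp add: le_zero_iff_zero_pprt[symmetric])
  then have "Pc d c'" unfolding Pc_def using c'c cd by (auto simp: c'_def)
  moreover have "inf c' (pprt (b - d)) = 0"
  proof (rule disj_le[OF _ _ _ _ pprt_disj[of "d - b"]])
    show "c' \<le> pprt (d - b)" unfolding c'_def using cd by (simp add: diff_right_mono pprt_mono)
  qed (auto simp: c'_def)
  ultimately show ?thesis using c'c by blast
qed

end


datatype 'a inst = IZ | IP 'a 'a | IN 'a | IJ 'a 'a | IM 'a 'a | IS 'a "nat \<Rightarrow> 'a"

lemma add_approx:
  fixes A Bv C :: real and pa pb :: int and q :: nat
  assumes q: "0 < q"
    and 1: "real_of_int pa / real q \<le> A" and 2: "A \<le> real_of_int (pa + 1) / real q"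
    and 3: "real_of_int pb / real q \<le> Bv" and 4: "Bv \<le> real_of_int (pb + 1) / real q"
    and 5: "real_of_int (pa + pb) / real q \<le> C" and 6: "C \<le> real_of_int ((pa + 1) + (pb + 1)) / real q"
  shows "\<bar>C - A - Bv\<bar> \<le> 2 / real q"
proof -
  define u where "u = 1 / real q"
  have d: "real_of_int z / real q = real_of_int z * u" for z unfolding u_def by simp
  have 1: "real_of_int pa * u \<le> A" using 1 unfolding d .
  have 2: "A \<le> real_of_int pa * u + u" using 2 unfolding d by (simp add: algebra_simps)
  have 3: "real_of_int pb * u \<le> Bv" using 3 unfolding d .
  have 4: "Bv \<le> real_of_int pb * u + u" using 4 unfolding d by (simp add: algebra_simps)
  have 5: "real_of_int pa * u + real_of_int pb * u \<le> C" using 5 unfolding d by (simp add: algebra_simps)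
  have 6: "C \<le> real_of_int pa * u + real_of_int pb * u + 2 * u" using 6 unfolding d by (simp add: algebra_simps)
  have "\<bar>C - A - Bv\<bar> \<le> 2 * u" unfolding abs_le_iff using 1 2 3 4 5 6 by linarith
  then show ?thesis unfolding u_def by simp
qed

lemma eps_le: fixes x y :: real assumes "\<And>m::nat. x \<le> y + 1 / real (Suc m)" shows "x \<le> y"
proof (rule field_le_epsilon)
  fix e :: real assume e: "0 < e"
  obtain n :: nat where n: "0 < n" "inverse (real n) < e" using ex_inverse_of_nat_less[OF e] by blast
  then obtain m where "n = Suc m" using gr0_implies_Suc by blast
  then have m: "inverse (real (Suc m)) < e" using n by simp
  have "x \<le> y + 1 / real (Suc m)" by (rule assms)
  then show "x \<le> y + e" using m by (simp add: inverse_eq_divide)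
qed

lemma mult_le_one: fixes t :: real assumes "0 \<le> 1 - real (Suc m) * t" shows "t \<le> 1 / real (Suc m)"
proof -
  have "real (Suc m) * t \<le> 1" using assms by simp
  then show ?thesis by (simp add: field_simps)
qed

context slg begin

fun sat :: "('a \<Rightarrow> real) \<Rightarrow> 'a inst \<Rightarrow> bool" where
  "sat \<phi> IZ = (\<phi> 0 = 0)"
| "sat \<phi> (IP a b) = (\<phi> (a + b) = \<phi> a + \<phi> b)"
| "sat \<phi> (IN a) = (\<phi> (- a) = - \<phi> a)"
| "sat \<phi> (IJ a b) = (\<phi> (sup a b) = max (\<phi> a) (\<phi> b))"
| "sat \<phi> (IM a b) = (\<phi> (inf a b) = min (\<phi> a) (\<phi> b))"
| "sat \<phi> (IS g f) = (\<phi> (sv g f) = (SUP n. min (\<phi> (f n)) (\<phi> g)))"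

fun elts :: "'a inst \<Rightarrow> 'a set" where
  "elts IZ = {}"
| "elts (IP a b) = {a, b}"
| "elts (IN a) = {a}"
| "elts (IJ a b) = {a, b}"
| "elts (IM a b) = {a, b}"
| "elts (IS g f) = insert (sv g f) (insert g (range f))"

lemma countable_elts: "countable (elts i)"
  by (cases i) auto

definition cstep :: "'a set \<Rightarrow> 'a set" where
  "cstep S = S \<union> {0} \<union> (\<lambda>(a, b). a + b) ` (S \<times> S) \<union> uminus ` S
     \<union> (\<lambda>(a, b). sup a b) ` (S \<times> S) \<union> (\<lambda>(a, b). inf a b) ` (S \<times> S)"

definition clos :: "'a set \<Rightarrow> 'a set" where
  "clos B = (\<Union>k. (cstep ^^ k) B)"

lemma countable_cstep: "countable S \<Longrightarrow> countable (cstep S)"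
  unfolding cstep_def by auto

lemma countable_clos: "countable B \<Longrightarrow> countable (clos B)"
proof -
  assume B: "countable B"
  have "countable ((cstep ^^ k) B)" for k
    by (induct k) (simp_all add: B countable_cstep)
  then show ?thesis unfolding clos_def by auto
qed

lemma cstep_sub: "S \<subseteq> cstep S" unfolding cstep_def by auto

lemma cstep_chain: "i \<le> j \<Longrightarrow> (cstep ^^ i) B \<subseteq> (cstep ^^ j) B"
proof (induct j rule: dec_induct)
  case (step n) then show ?case using cstep_sub[of "(cstep ^^ n) B"] by auto
qed simp

lemma clos_base: "B \<subseteq> clos B"
  unfolding clos_def by (metis UN_upper UNIV_I funpow_0)

lemma clos_bin:
  assumes a: "a \<in> clos B" and b: "b \<in> clos B"
  obtains k where "a \<in> (cstep ^^ k) B" "b \<in> (cstep ^^ k) B"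
proof -
  obtain i where i: "a \<in> (cstep ^^ i) B" using a unfolding clos_def by auto
  obtain j where j: "b \<in> (cstep ^^ j) B" using b unfolding clos_def by auto
  show ?thesis
    using that[of "max i j"] cstep_chain[of i "max i j" B] cstep_chain[of j "max i j" B] i j by auto
qed

lemma clos_suc: "x \<in> cstep ((cstep ^^ k) B) \<Longrightarrow> x \<in> clos B"
  unfolding clos_def by (metis UN_I UNIV_I funpow.simps(2) o_apply)

lemma clos_add: "a \<in> clos B \<Longrightarrow> b \<in> clos B \<Longrightarrow> a + b \<in> clos B"
  by (erule clos_bin, assumption) (rule clos_suc, auto simp: cstep_def)

lemma clos_sup: "a \<in> clos B \<Longrightarrow> b \<in> clos B \<Longrightarrow> sup a b \<in> clos B"
  by (erule clos_bin, assumption) (rule clos_suc, auto simp: cstep_def)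

lemma clos_inf: "a \<in> clos B \<Longrightarrow> b \<in> clos B \<Longrightarrow> inf a b \<in> clos B"
  by (erule clos_bin, assumption) (rule clos_suc, auto simp: cstep_def)

lemma clos_uminus: "a \<in> clos B \<Longrightarrow> - a \<in> clos B"
proof -
  assume "a \<in> clos B"
  then obtain k where "a \<in> (cstep ^^ k) B" unfolding clos_def by auto
  then show ?thesis by (intro clos_suc[of _ k]) (auto simp: cstep_def)
qed

lemma clos_zero: "0 \<in> clos B"
  by (rule clos_suc[of _ 0]) (auto simp: cstep_def)

lemma clos_diff: "a \<in> clos B \<Longrightarrow> b \<in> clos B \<Longrightarrow> a - b \<in> clos B"
  unfolding diff_conv_add_uminus by (intro clos_add clos_uminus)

lemma clos_nm: "a \<in> clos B \<Longrightarrow> nm n a \<in> clos B"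
  by (induct n) (simp_all add: clos_zero clos_add)

lemma clos_zm: "a \<in> clos B \<Longrightarrow> zm i a \<in> clos B"
  unfolding zm_def by (intro clos_diff clos_nm)

lemma clos_pprt: "a \<in> clos B \<Longrightarrow> pprt a \<in> clos B"
  unfolding pprt_def by (intro clos_sup clos_zero)

lemma clos_Fm: "g \<in> clos B \<Longrightarrow> (\<And>k. f k \<in> clos B) \<Longrightarrow> Fm g f k \<in> clos B"
  by (induct k) (simp_all add: clos_inf clos_sup)

lemma sup_neg_nonneg: "0 \<le> sup a (- a)"
proof -
  have "a + - a \<le> sup a (- a) + sup a (- a)" by (intro add_mono sup_ge1 sup_ge2)
  then show ?thesis by simp
qed

lemma inf_zero_down: "0 \<le> c' \<Longrightarrow> c' \<le> c \<Longrightarrow> inf c (pprt z) = 0 \<Longrightarrow> inf c' (pprt z) = 0"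
  by (rule disj_le[OF _ zero_le_pprt _ order.refl])

lemma zm_diff: "zm (i - j) x = zm i x - zm j x"
  using zm_add[of i "- j" x] by (simp add: zm_neg)

lemma my_cancel: "(X - Y) + (Z - X) = Z - Y"
  by (simp add: algebra_simps)

lemma my_add_diff: "a + (b - a) = b"
  by (simp add: algebra_simps)

lemma my_add4: "(X - Y) + (Z - W) = (X + Z) - (Y + W)"
  by (simp add: algebra_simps)

lemma real_eq_by_eps: fixes D :: real assumes "\<And>q::nat. 0 < q \<Longrightarrow> \<bar>D\<bar> \<le> 2 / real q" shows "D = 0"
proof (rule ccontr)
  assume D: "D \<noteq> 0"
  obtain q :: nat where q: "2 / \<bar>D\<bar> < real q" using reals_Archimedean2 by blast
  then have q0: "0 < q" using D by (metis abs_ge_zero divide_nonneg_nonneg of_nat_0_less_iff order_le_less_trans zero_le_numeral)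
  have "\<bar>D\<bar> \<le> 2 / real q" using assms q0 by blast
  moreover have "2 / real q < \<bar>D\<bar>" using q D q0 by (simp add: field_simps)
  ultimately show False by simp
qed


lemma core:
  fixes F :: "nat \<Rightarrow> 'a inst" and x y :: 'a
  assumes xy: "x \<noteq> y"
  shows "\<exists>\<chi>. \<chi> x \<noteq> \<chi> y \<and> (\<forall>n. sat \<chi> (F n))"
proof -
  define B where "B = {x, y} \<union> (\<Union>n. elts (F n))"
  define E where "E = clos B"
  have cE: "countable E" unfolding E_def B_def
    by (intro countable_clos countable_Un countable_UN) (auto simp: countable_elts)
  have BE: "B \<subseteq> E" unfolding E_def by (rule clos_base)
  have xE: "x \<in> E" and yE: "y \<in> E" using BE by (auto simp: B_def)
  have eltsE: "z \<in> elts (F n) \<Longrightarrow> z \<in> E" for z n using BE by (auto simp: B_def)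
  have E_add: "a \<in> E \<Longrightarrow> b \<in> E \<Longrightarrow> a + b \<in> E" for a b unfolding E_def by (rule clos_add)
  have E_sup: "a \<in> E \<Longrightarrow> b \<in> E \<Longrightarrow> sup a b \<in> E" for a b unfolding E_def by (rule clos_sup)
  have E_inf: "a \<in> E \<Longrightarrow> b \<in> E \<Longrightarrow> inf a b \<in> E" for a b unfolding E_def by (rule clos_inf)
  have E_diff: "a \<in> E \<Longrightarrow> b \<in> E \<Longrightarrow> a - b \<in> E" for a b unfolding E_def by (rule clos_diff)
  have E_uminus: "a \<in> E \<Longrightarrow> - a \<in> E" for a unfolding E_def by (rule clos_uminus)
  have E_zero: "0 \<in> E" unfolding E_def by (rule clos_zero)
  have E_nm: "a \<in> E \<Longrightarrow> nm n a \<in> E" for a n unfolding E_def by (rule clos_nm)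
  have E_zm: "a \<in> E \<Longrightarrow> zm i a \<in> E" for a i unfolding E_def by (rule clos_zm)
  have E_pprt: "a \<in> E \<Longrightarrow> pprt a \<in> E" for a unfolding E_def by (rule clos_pprt)
  define d where "d = sup (x - y) (y - x)"
  have dE: "d \<in> E" unfolding d_def by (intro E_sup E_diff xE yE)
  have d0: "0 \<le> d"
  proof -
    have "x - y + (y - x) \<le> d + d" unfolding d_def by (intro add_mono sup_ge1 sup_ge2)
    moreover have "x - y + (y - x) = 0" by (simp add: algebra_simps)
    ultimately have "0 \<le> d + d" by simp
    then show ?thesis by simp
  qed
  have dne: "d \<noteq> 0"
  proof
    assume "d = 0"
    then have "x - y \<le> 0" "y - x \<le> 0" unfolding d_def by (metis sup_ge1 sup_ge2)+
    then show False using xy by simp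
  qed
  have Ene: "E \<noteq> {}" using xE by auto
  define en where "en = from_nat_into E"
  have en_E: "en j \<in> E" for j unfolding en_def using Ene by (rule from_nat_into)
  have en_surj: "\<exists>j. en j = a" if "a \<in> E" for a
    unfolding en_def using from_nat_into_surj[OF cE that] by blast
  define aseq where "aseq n k = (case F n of IS g f \<Rightarrow> sv g f - Fm g f k | _ \<Rightarrow> 0)" for n k
  have aseq_nonneg: "0 \<le> aseq n k" for n k
    by (cases "F n") (simp_all add: aseq_def Fm_le_sv)
  have aseqE: "aseq n k \<in> E" for n k
  proof (cases "F n")
    case (IS g f)
    have "sv g f \<in> E" "g \<in> E" "f i \<in> E" for i using eltsE[of _ n] IS by auto
    then have "Fm g f k \<in> E" unfolding E_def by (intro clos_Fm) (auto simp: E_def)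
    then show ?thesis unfolding aseq_def IS using \<open>sv g f \<in> E\<close> by (simp add: E_diff)
  qed (simp_all add: aseq_def E_zero)
  have aseq_inf: "\<not> (\<forall>k. c \<le> nm (Suc m) (aseq n k))" if P: "Pc d c" for c m n
  proof
    assume H: "\<forall>k. c \<le> nm (Suc m) (aseq n k)"
    have c0: "0 \<le> c" and cne: "c \<noteq> 0" using P by (auto simp: Pc_def)
    have "c \<le> 0"
    proof (cases "F n")
      case (IS g f)
      have "nm (Suc m) (Fm g f k) \<le> nm (Suc m) (sv g f) - c" for k
        using H[rule_format, of k] by (simp add: aseq_def IS nm_diff le_diff_eq add.commute)
      then have "nm (Suc m) (sv g f) \<le> nm (Suc m) (sv g f) - c" by (rule sup_mult)
      then show ?thesis by (simp add: le_diff_eq)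
    qed (use H in \<open>auto simp: aseq_def\<close>)
    then show False using c0 cne by (simp add: order.antisym)
  qed
  define Q where "Q j c \<longleftrightarrow> (inf c (pprt (- en j)) = 0 \<or> inf c (pprt (en j)) = 0)
     \<and> (\<exists>M. inf c (pprt (sup (en j) (- en j) - nm M d)) = 0)
     \<and> (\<exists>k. inf c (pprt (nm (Suc (snd (prod_decode j))) (aseq (fst (prod_decode j)) k) - d)) = 0)" for j c
  have Q_ex: "\<exists>c'. Pc d c' \<and> c' \<le> c \<and> Q j c'" if P: "Pc d c" for j c
  proof -
    define a where "a = en j"
    define n where "n = fst (prod_decode j)"
    define m where "m = snd (prod_decode j)"
    obtain c1 where c1: "Pc d c1" "c1 \<le> c" "inf c1 (pprt (- a)) = 0 \<or> inf c1 (pprt a) = 0"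
      using step1[OF P] by blast
    obtain c2 M where c2: "Pc d c2" "c2 \<le> c1" "inf c2 (pprt (sup a (- a) - nm M d)) = 0"
      using step2[OF c1(1) sup_neg_nonneg] by blast
    obtain k where k: "\<not> c2 \<le> nm (Suc m) (aseq n k)" using aseq_inf[OF c2(1)] by blast
    obtain c3 where c3: "Pc d c3" "c3 \<le> c2" "inf c3 (pprt (nm (Suc m) (aseq n k) - d)) = 0"
      using step3[OF c2(1) nm_nonneg[OF aseq_nonneg] k] by blast
    have c30: "0 \<le> c3" using c3(1) by (simp add: Pc_def)
    have c31: "c3 \<le> c1" using c3(2) c2(2) by (rule order.trans)
    have "inf c3 (pprt (- a)) = 0 \<or> inf c3 (pprt a) = 0"
      using c1(3) inf_zero_down[OF c30 c31] by blast
    moreover have "inf c3 (pprt (sup a (- a) - nm M d)) = 0"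
      using inf_zero_down[OF c30 c3(2) c2(3)] .
    ultimately have "Q j c3" unfolding Q_def a_def[symmetric] n_def[symmetric] m_def[symmetric]
      using c3(3) by blast
    then show ?thesis using c3(1) c3(2) c2(2) c1(2) by (blast intro: order.trans)
  qed
  define step where "step j c = (SOME c'. Pc d c' \<and> c' \<le> c \<and> Q j c')" for j c
  define ch where "ch = rec_nat d step"
  have ch0: "ch 0 = d" and chS: "ch (Suc j) = step j (ch j)" for j by (simp_all add: ch_def)
  have chP: "Pc d (ch j)" for j
  proof (induct j)
    case 0 then show ?case using d0 dne by (simp add: ch0 Pc_def)
  next
    case (Suc j) then show ?case unfolding chS step_def using someI_ex[OF Q_ex[OF Suc]] by blast
  qed
  have chS': "ch (Suc j) \<le> ch j \<and> Q j (ch (Suc j))" for j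
    unfolding chS step_def using someI_ex[OF Q_ex[OF chP[of j]]] by blast
  have ch_anti: "ch j' \<le> ch j" if "j \<le> j'" for j j'
    using that
  proof (induct j' rule: dec_induct)
    case (step n) then show ?case using chS'[of n] by (blast intro: order.trans)
  qed simp
  have ch_nonneg: "0 \<le> ch j" for j using chP[of j] by (simp add: Pc_def)
  define T where "T z \<longleftrightarrow> (\<exists>j. inf (ch j) (pprt (- z)) = 0)" for z
  have T_mono: "T w" if Tz: "T z" and zw: "z \<le> w" for z w
  proof -
    obtain j where j: "inf (ch j) (pprt (- z)) = 0" using Tz unfolding T_def by blast
    have "pprt (- w) \<le> pprt (- z)" using zw by (simp add: pprt_mono)
    then have "inf (ch j) (pprt (- w)) = 0"
      by (rule disj_le[OF ch_nonneg zero_le_pprt order.refl _ j])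
    then show ?thesis unfolding T_def by blast
  qed
  have T_add: "T (z + w)" if Tz: "T z" and Tw: "T w" for z w
  proof -
    obtain j where j: "inf (ch j) (pprt (- z)) = 0" using Tz unfolding T_def by blast
    obtain i where i: "inf (ch i) (pprt (- w)) = 0" using Tw unfolding T_def by blast
    define k where "k = max i j"
    have jk: "inf (ch k) (pprt (- z)) = 0"
      by (rule inf_zero_down[OF ch_nonneg _ j]) (simp add: ch_anti k_def)
    have ik: "inf (ch k) (pprt (- w)) = 0"
      by (rule inf_zero_down[OF ch_nonneg _ i]) (simp add: ch_anti k_def)
    have "- (z + w) \<le> pprt (- z) + pprt (- w)"
      unfolding minus_add_distrib pprt_def by (intro add_mono sup_ge1)
    then have "pprt (- (z + w)) \<le> pprt (- z) + pprt (- w)"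
      unfolding pprt_def[of "- (z + w)"] by (rule sup_least) (simp add: add_nonneg_nonneg)
    then have "inf (ch k) (pprt (- (z + w))) \<le> inf (ch k) (pprt (- z) + pprt (- w))"
      by (rule inf_mono[OF order.refl])
    also have "\<dots> \<le> inf (ch k) (pprt (- z)) + inf (ch k) (pprt (- w))"
      by (rule riesz[OF ch_nonneg zero_le_pprt zero_le_pprt])
    finally have "inf (ch k) (pprt (- (z + w))) \<le> 0" unfolding jk ik by simp
    moreover have "0 \<le> inf (ch k) (pprt (- (z + w)))" using ch_nonneg[of k] by simp
    ultimately have "inf (ch k) (pprt (- (z + w))) = 0" by (rule order.antisym)
    then show ?thesis unfolding T_def by blast
  qed
  have T_nonneg: "T z" if "0 \<le> z" for z
  proof -
    have "pprt (- z) = 0" using that by (simp add: le_zero_iff_zero_pprt[symmetric])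
    then have "inf (ch 0) (pprt (- z)) = 0" using ch_nonneg[of 0] by (simp add: inf_absorb2)
    then show ?thesis unfolding T_def by blast
  qed
  have T_not_negd: "\<not> T (- d)"
  proof
    assume "T (- d)"
    then obtain j where j: "inf (ch j) (pprt (- (- d))) = 0" unfolding T_def by blast
    have "pprt (- (- d)) = d" using d0 by simp
    moreover have "inf (ch j) d = ch j" using chP[of j] by (simp add: Pc_def inf_absorb1)
    ultimately have "ch j = 0" using j by simp
    then show False using chP[of j] by (simp add: Pc_def)
  qed
  have T_total: "T a \<or> T (- a)" if aE: "a \<in> E" for a
  proof -
    obtain j where j: "en j = a" using en_surj[OF aE] by blast
    have "inf (ch (Suc j)) (pprt (- a)) = 0 \<or> inf (ch (Suc j)) (pprt (- (- a))) = 0"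
      using chS'[of j] unfolding Q_def j by simp
    then show ?thesis unfolding T_def by blast
  qed
  have T_fin: "\<exists>M. T (nm M d - sup a (- a))" if aE: "a \<in> E" for a
  proof -
    obtain j where j: "en j = a" using en_surj[OF aE] by blast
    obtain M where "inf (ch (Suc j)) (pprt (sup a (- a) - nm M d)) = 0"
      using chS'[of j] unfolding Q_def j by blast
    then have "inf (ch (Suc j)) (pprt (- (nm M d - sup a (- a)))) = 0" by (simp only: minus_diff_eq)
    then show ?thesis unfolding T_def by blast
  qed
  have T_seq: "\<exists>k. T (d - nm (Suc m) (aseq n k))" for n m
  proof -
    define j where "j = prod_encode (n, m)"
    have "prod_decode j = (n, m)" by (simp add: j_def)
    then obtain k where "inf (ch (Suc j)) (pprt (nm (Suc m) (aseq n k) - d)) = 0"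
      using chS'[of j] unfolding Q_def by auto
    then have "inf (ch (Suc j)) (pprt (- (d - nm (Suc m) (aseq n k)))) = 0" by (simp only: minus_diff_eq)
    then show ?thesis unfolding T_def by blast
  qed
  have T_nm: "T (nm n z)" if "T z" for n z
  proof (induct n)
    case 0 show ?case by (simp add: T_nonneg)
  next
    case (Suc n) then show ?case using T_add[OF that] by simp
  qed
  have T_zm_neg: "\<not> T (zm k d)" if "k < 0" for k
  proof
    assume "T (zm k d)"
    moreover have "zm k d \<le> zm (- 1) d" using that d0 by (intro zm_mono_left) auto
    ultimately have "T (zm (- 1) d)" by (rule T_mono)
    then have "T (- d)" by (simp add: zm_neg)
    then show False using T_not_negd by simp
  qed
  define Sa where "Sa a = {real_of_int p / real q | p q. 0 < q \<and> T (nm q a - zm p d)}" for a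
  define \<chi> where "\<chi> a = Sup (Sa a)" for a
  have compat: "real_of_int p' / real q' \<le> real_of_int p / real q"
    if q: "0 < q" and q': "0 < q'" and A: "T (nm q' a - zm p' d)" and B: "T (zm p d - nm q a)"
    for a p p' q q'
  proof -
    have "T (nm q (nm q' a - zm p' d) + nm q' (zm p d - nm q a))" by (intro T_add T_nm A B)
    moreover have "nm q (nm q' a - zm p' d) + nm q' (zm p d - nm q a) = zm (int q' * p - int q * p') d"
    proof -
      have "nm q (nm q' a - zm p' d) + nm q' (zm p d - nm q a)
          = (nm (q * q') a - zm (int q * p') d) + (zm (int q' * p) d - nm (q * q') a)"
        by (simp only: nm_diff zm_nm nm_mult[symmetric] mult.commute[of q' q])
      also have "\<dots> = zm (int q' * p) d - zm (int q * p') d" by (rule my_cancel)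
      also have "\<dots> = zm (int q' * p - int q * p') d" by (simp only: zm_diff)
      finally show ?thesis .
    qed
    ultimately have "T (zm (int q' * p - int q * p') d)" by simp
    then have "\<not> (int q' * p - int q * p' < 0)" using T_zm_neg by blast
    then have "p' * int q \<le> p * int q'" by (simp add: algebra_simps)
    then have "real_of_int (p' * int q) \<le> real_of_int (p * int q')" by (simp only: of_int_le_iff)
    then have "real_of_int p' * real q \<le> real_of_int p * real q'" by simp
    then show ?thesis using q q' by (simp add: field_simps)
  qed
  have bounds: "\<exists>M::nat. T (nm 1 a - zm (- int M) d) \<and> T (zm (int M) d - nm 1 a)" if aE: "a \<in> E" for a
  proof -
    obtain M where M: "T (nm M d - sup a (- a))" using T_fin[OF aE] by blast
    have e1: "nm 1 a - zm (- int M) d = a + nm M d" by (simp add: zm_neg)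
    have e2: "zm (int M) d - nm 1 a = nm M d - a" by simp
    have "- a \<le> sup a (- a)" by (rule sup_ge2)
    then have "nm M d - sup a (- a) \<le> a + nm M d" by (simp add: algebra_simps)
    moreover have "nm M d - sup a (- a) \<le> nm M d - a" by (intro diff_left_mono sup_ge1)
    ultimately show ?thesis using M e1 e2 T_mono by metis
  qed
  have Sa_ne: "Sa a \<noteq> {}" and Sa_bdd: "bdd_above (Sa a)"
    and Sa_le: "\<And>r. r \<in> Sa a \<Longrightarrow> r \<le> real M" if aE: "a \<in> E" and M: "T (zm (int M) d - nm 1 a)"
    and M': "T (nm 1 a - zm (- int M') d)" for a M M'
  proof -
    show le: "r \<le> real M" if rS: "r \<in> Sa a" for r
    proof -
      obtain p q where r: "r = real_of_int p / real q" "0 < q" "T (nm q a - zm p d)"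
        using rS unfolding Sa_def by blast
      have "real_of_int p / real q \<le> real_of_int (int M) / real (1::nat)"
        by (rule compat[OF _ r(2) r(3) M]) simp
      then show ?thesis using r(1) by simp
    qed
    show "bdd_above (Sa a)" using le by (intro Conditionally_Complete_Lattices.bdd_aboveI) blast
    have "real_of_int (- int M') / real (1::nat) \<in> Sa a" unfolding Sa_def using M' by blast
    then show "Sa a \<noteq> {}" by blast
  qed
  have cut1: "real_of_int p / real q \<le> \<chi> a" if aE: "a \<in> E" and q: "0 < q" and A: "T (nm q a - zm p d)" for a p q
  proof -
    obtain M where M: "T (nm 1 a - zm (- int M) d)" "T (zm (int M) d - nm 1 a)" using bounds[OF aE] by blast
    have "real_of_int p / real q \<in> Sa a" unfolding Sa_def using q A by blast
    then show ?thesis unfolding \<chi>_def by (rule cSup_upper) (rule Sa_bdd[OF aE M(2) M(1)])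
  qed
  have cut2: "\<chi> a \<le> real_of_int p / real q" if aE: "a \<in> E" and q: "0 < q" and A: "T (zm p d - nm q a)" for a p q
  proof -
    obtain M where M: "T (nm 1 a - zm (- int M) d)" "T (zm (int M) d - nm 1 a)" using bounds[OF aE] by blast
    show ?thesis unfolding \<chi>_def
    proof (rule cSup_least[OF Sa_ne[OF aE M(2) M(1)]])
      fix r assume "r \<in> Sa a"
      then obtain p' q' where r: "r = real_of_int p' / real q'" "0 < q'" "T (nm q' a - zm p' d)"
        unfolding Sa_def by blast
      show "r \<le> real_of_int p / real q" unfolding r(1) by (rule compat[OF q r(2) r(3) A])
    qed
  qed
  have floor: "\<exists>p. T (nm q a - zm p d) \<and> T (zm (p + 1) d - nm q a)" if aE: "a \<in> E" and q: "0 < q" for a q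
  proof -
    obtain M where M: "T (nm 1 a - zm (- int M) d)" "T (zm (int M) d - nm 1 a)" using bounds[OF aE] by blast
    define S where "S p \<longleftrightarrow> T (nm q a - zm p d)" for p
    define p0 where "p0 = int q * (- int M)"
    have "nm q (nm 1 a - zm (- int M) d) = nm q a - zm p0 d"
      unfolding p0_def by (simp only: nm_diff nm_one zm_nm)
    then have S0: "S p0" unfolding S_def using T_nm[OF M(1), of q] by simp
    have Sbig: "\<not> S (int q * int M + 1)"
    proof
      assume "S (int q * int M + 1)"
      then have "real_of_int (int q * int M + 1) / real q \<le> real_of_int (int M) / real (1::nat)"
        unfolding S_def by (intro compat[OF _ q _ M(2)]) simp_all
      moreover have "real_of_int (int q * int M + 1) / real q = real M + 1 / real q"
        using q by (simp add: field_simps)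
      ultimately show False using q by simp
    qed
    have "\<exists>p. S p \<and> \<not> S (p + 1)"
    proof (rule ccontr)
      assume "\<not> ?thesis"
      then have step: "S p \<Longrightarrow> S (p + 1)" for p by blast
      have "S (p0 + int k)" for k
      proof (induct k)
        case 0 then show ?case using S0 by simp
      next
        case (Suc k)
        have e: "p0 + int (Suc k) = p0 + int k + 1" by simp
        show ?case unfolding e by (rule step[OF Suc])
      qed
      moreover have "p0 + int (nat (2 * int q * int M + 1)) = int q * int M + 1"
        unfolding p0_def by simp
      ultimately show False using Sbig by metis
    qed
    then obtain p where p: "S p" "\<not> S (p + 1)" by blast
    have "nm q a - zm (p + 1) d \<in> E" by (intro E_diff E_nm E_zm aE dE)
    then have "T (- (nm q a - zm (p + 1) d))" using T_total p(2) unfolding S_def by blast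
    then have "T (zm (p + 1) d - nm q a)" by (simp only: minus_diff_eq)
    then show ?thesis using p(1) unfolding S_def by blast
  qed
  have \<chi>_add: "\<chi> (a + b) = \<chi> a + \<chi> b" if aE: "a \<in> E" and bE: "b \<in> E" for a b
  proof -
    have abE: "a + b \<in> E" by (rule E_add[OF aE bE])
    have "\<bar>\<chi> (a + b) - \<chi> a - \<chi> b\<bar> \<le> 2 / real q" if q: "0 < q" for q :: nat
    proof -
      obtain pa where pa: "T (nm q a - zm pa d)" "T (zm (pa + 1) d - nm q a)" using floor[OF aE q] by blast
      obtain pb where pb: "T (nm q b - zm pb d)" "T (zm (pb + 1) d - nm q b)" using floor[OF bE q] by blast
      have "T ((nm q a - zm pa d) + (nm q b - zm pb d))" by (rule T_add[OF pa(1) pb(1)])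
      moreover have "(nm q a - zm pa d) + (nm q b - zm pb d) = nm q (a + b) - zm (pa + pb) d"
        by (simp only: my_add4 nm_distrib zm_add)
      ultimately have A: "T (nm q (a + b) - zm (pa + pb) d)" by simp
      have "T ((zm (pa + 1) d - nm q a) + (zm (pb + 1) d - nm q b))" by (rule T_add[OF pa(2) pb(2)])
      moreover have "(zm (pa + 1) d - nm q a) + (zm (pb + 1) d - nm q b) = zm ((pa + 1) + (pb + 1)) d - nm q (a + b)"
        by (simp only: my_add4 nm_distrib zm_add)
      ultimately have B: "T (zm ((pa + 1) + (pb + 1)) d - nm q (a + b))" by simp
      have 1: "real_of_int pa / real q \<le> \<chi> a" by (rule cut1[OF aE q pa(1)])
      have 2: "\<chi> a \<le> real_of_int (pa + 1) / real q" by (rule cut2[OF aE q pa(2)])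
      have 3: "real_of_int pb / real q \<le> \<chi> b" by (rule cut1[OF bE q pb(1)])
      have 4: "\<chi> b \<le> real_of_int (pb + 1) / real q" by (rule cut2[OF bE q pb(2)])
      have 5: "real_of_int (pa + pb) / real q \<le> \<chi> (a + b)" by (rule cut1[OF abE q A])
      have 6: "\<chi> (a + b) \<le> real_of_int ((pa + 1) + (pb + 1)) / real q" by (rule cut2[OF abE q B])
      show ?thesis by (rule add_approx[OF q 1 2 3 4 5 6])
    qed
    then have "\<chi> (a + b) - \<chi> a - \<chi> b = 0" by (rule real_eq_by_eps)
    then show ?thesis by simp
  qed
  have \<chi>_T: "0 \<le> \<chi> a" if aE: "a \<in> E" and Ta: "T a" for a
    using cut1[OF aE, of 1 0] Ta by simp
  have \<chi>_Tn: "\<chi> a \<le> 0" if aE: "a \<in> E" and Ta: "T (- a)" for a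
    using cut2[OF aE, of 1 0] Ta by simp
  have T0: "T 0" by (rule T_nonneg) simp
  have \<chi>_d: "\<chi> d = 1"
    using cut1[OF dE, of 1 1] cut2[OF dE, of 1 1] T0 by simp
  have \<chi>_0: "\<chi> 0 = 0" using \<chi>_T[OF E_zero T0] \<chi>_Tn[OF E_zero] T0 by simp
  have \<chi>_neg: "\<chi> (- a) = - \<chi> a" if aE: "a \<in> E" for a
    using \<chi>_add[OF aE E_uminus[OF aE]] \<chi>_0 by simp
  have \<chi>_diff: "\<chi> (a - b) = \<chi> a - \<chi> b" if aE: "a \<in> E" and bE: "b \<in> E" for a b
    using \<chi>_add[OF aE E_uminus[OF bE]] \<chi>_neg[OF bE] by (simp only: diff_conv_add_uminus)
  have \<chi>_nm: "\<chi> (nm n a) = real n * \<chi> a" if aE: "a \<in> E" for n a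
  proof (induct n)
    case 0 then show ?case using \<chi>_0 by simp
  next
    case (Suc n) then show ?case using \<chi>_add[OF aE E_nm[OF aE, of n]] by (simp add: algebra_simps)
  qed
  have \<chi>_mono: "\<chi> a \<le> \<chi> b" if aE: "a \<in> E" and bE: "b \<in> E" and ab: "a \<le> b" for a b
  proof -
    have "0 \<le> \<chi> (b - a)" by (rule \<chi>_T[OF E_diff[OF bE aE] T_nonneg]) (simp add: ab)
    then show ?thesis using \<chi>_diff[OF bE aE] by simp
  qed
  have \<chi>_pprt: "\<chi> (pprt a) = max (\<chi> a) 0" if aE: "a \<in> E" for a
  proof -
    have pE: "pprt a \<in> E" by (rule E_pprt[OF aE])
    have nE: "pprt (- a) \<in> E" by (rule E_pprt[OF E_uminus[OF aE]])
    have split: "a = pprt a - pprt (- a)" by (simp add: pprt_neg prts[of a, symmetric])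
    have ch: "\<chi> a = \<chi> (pprt a) - \<chi> (pprt (- a))" using \<chi>_diff[OF pE nE] split by simp
    show ?thesis
    proof (cases "T a")
      case True
      then obtain j where j: "inf (ch j) (pprt (- a)) = 0" unfolding T_def by blast
      have "inf (ch j) (pprt (- (- pprt (- a)))) = 0" using j by simp
      then have "T (- pprt (- a))" unfolding T_def by blast
      then have "\<chi> (pprt (- a)) = 0" using \<chi>_Tn[OF nE] \<chi>_T[OF nE T_nonneg[OF zero_le_pprt]] by simp
      moreover have "0 \<le> \<chi> a" by (rule \<chi>_T[OF aE True])
      ultimately show ?thesis using ch by simp
    next
      case False
      then have "T (- a)" using T_total[OF aE] by blast
      then obtain j where j: "inf (ch j) (pprt (- (- a))) = 0" unfolding T_def by blast
      have "inf (ch j) (pprt (- (- pprt a))) = 0" using j by simp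
      then have "T (- pprt a)" unfolding T_def by blast
      then have "\<chi> (pprt a) = 0" using \<chi>_Tn[OF pE] \<chi>_T[OF pE T_nonneg[OF zero_le_pprt]] by simp
      moreover have "\<chi> a \<le> 0" by (rule \<chi>_Tn[OF aE \<open>T (- a)\<close>])
      ultimately show ?thesis by simp
    qed
  qed
  have \<chi>_sup: "\<chi> (sup a b) = max (\<chi> a) (\<chi> b)" if aE: "a \<in> E" and bE: "b \<in> E" for a b
  proof -
    have eq: "sup a b = a + pprt (b - a)"
      unfolding pprt_def add_sup_distrib_left my_add_diff by (simp add: sup_commute)
    have "\<chi> (sup a b) = \<chi> a + max (\<chi> b - \<chi> a) 0"
      unfolding eq using \<chi>_add[OF aE E_pprt[OF E_diff[OF bE aE]]] \<chi>_pprt[OF E_diff[OF bE aE]] \<chi>_diff[OF bE aE]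
      by simp
    then show ?thesis by simp
  qed
  have \<chi>_inf: "\<chi> (inf a b) = min (\<chi> a) (\<chi> b)" if aE: "a \<in> E" and bE: "b \<in> E" for a b
  proof -
    have eq: "inf a b = - sup (- a) (- b)" by (rule inf_eq_neg_sup)
    show ?thesis unfolding eq
      using \<chi>_neg[OF E_sup[OF E_uminus[OF aE] E_uminus[OF bE]]] \<chi>_sup[OF E_uminus[OF aE] E_uminus[OF bE]]
        \<chi>_neg[OF aE] \<chi>_neg[OF bE] by simp
  qed
  have sat_all: "sat \<chi> (F n)" for n
  proof (cases "F n")
    case IZ then show ?thesis using \<chi>_0 by simp
  next
    case (IP a b)
    then have "a \<in> E" "b \<in> E" using eltsE[of _ n] by auto
    then show ?thesis using IP \<chi>_add by simp
  next
    case (IN a)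
    then have "a \<in> E" using eltsE[of _ n] by auto
    then show ?thesis using IN \<chi>_neg by simp
  next
    case (IJ a b)
    then have "a \<in> E" "b \<in> E" using eltsE[of _ n] by auto
    then show ?thesis using IJ \<chi>_sup by simp
  next
    case (IM a b)
    then have "a \<in> E" "b \<in> E" using eltsE[of _ n] by auto
    then show ?thesis using IM \<chi>_inf by simp
  next
    case (IS g f)
    have sE: "sv g f \<in> E" and gE: "g \<in> E" using eltsE[of _ n] IS by auto
    have fE: "f i \<in> E" for i using eltsE[of _ n] IS by auto
    have FmE: "Fm g f k \<in> E" for k unfolding E_def
      by (rule clos_Fm) (use gE fE in \<open>auto simp: E_def\<close>)
    have ifE: "inf (f i) g \<in> E" for i by (rule E_inf[OF fE gE])
    define SUPv where "SUPv = (SUP i. min (\<chi> (f i)) (\<chi> g))"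
    have bdd: "bdd_above (range (\<lambda>i. min (\<chi> (f i)) (\<chi> g)))"
      by (rule Conditionally_Complete_Lattices.bdd_aboveI[of _ "\<chi> g"]) auto
    have mi: "min (\<chi> (f i)) (\<chi> g) = \<chi> (inf (f i) g)" for i using \<chi>_inf[OF fE gE] by simp
    have le1: "SUPv \<le> \<chi> (sv g f)" unfolding SUPv_def
    proof (rule cSUP_least)
      fix i show "min (\<chi> (f i)) (\<chi> g) \<le> \<chi> (sv g f)"
        unfolding mi by (rule \<chi>_mono[OF ifE sE sv_upper])
    qed simp
    have upi: "\<chi> (inf (f i) g) \<le> SUPv" for i
      unfolding SUPv_def mi[symmetric] by (rule cSUP_upper[OF UNIV_I bdd])
    have FmSUP: "\<chi> (Fm g f k) \<le> SUPv" for k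
    proof (induct k)
      case 0 then show ?case using upi[of 0] by simp
    next
      case (Suc k) then show ?case
        using \<chi>_sup[OF FmE ifE, of k "Suc k"] upi[of "Suc k"] by simp
    qed
    have le2: "\<chi> (sv g f) \<le> SUPv"
    proof (rule eps_le)
      fix m
      obtain k where k: "T (d - nm (Suc m) (aseq n k))" using T_seq by blast
      have ak: "aseq n k = sv g f - Fm g f k" by (simp add: aseq_def IS)
      have XE: "d - nm (Suc m) (sv g f - Fm g f k) \<in> E" by (intro E_diff E_nm dE sE FmE)
      have "0 \<le> \<chi> (d - nm (Suc m) (sv g f - Fm g f k))" using \<chi>_T[OF XE] k unfolding ak by simp
      also have "\<chi> (d - nm (Suc m) (sv g f - Fm g f k)) = 1 - real (Suc m) * (\<chi> (sv g f) - \<chi> (Fm g f k))"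
        unfolding \<chi>_diff[OF dE E_nm[OF E_diff[OF sE FmE]]] \<chi>_nm[OF E_diff[OF sE FmE]] \<chi>_diff[OF sE FmE] \<chi>_d
        by (rule refl)
      finally have "\<chi> (sv g f) - \<chi> (Fm g f k) \<le> 1 / real (Suc m)" by (rule mult_le_one)
      then show "\<chi> (sv g f) \<le> SUPv + 1 / real (Suc m)" using FmSUP[of k] by linarith
    qed
    show ?thesis using IS le1 le2 unfolding SUPv_def by simp
  qed
  have "\<chi> d = max (\<chi> x - \<chi> y) (\<chi> y - \<chi> x)"
    using \<chi>_sup[OF E_diff[OF xE yE] E_diff[OF yE xE]] \<chi>_diff[OF xE yE] \<chi>_diff[OF yE xE]
    unfolding d_def by simp
  then have "\<chi> x \<noteq> \<chi> y" using \<chi>_d by auto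
  then show ?thesis using sat_all by blast
qed

end


lemma bridge_lg:
  fixes G :: "'a sl_alg"
  assumes L: "lgroup_axioms G"
  shows "class.lattice_ab_group_add (splus G) (szero G) (\<lambda>x y. splus G x (sneg G y)) (sneg G)
     (\<lambda>x y. smeet G x y = x) (\<lambda>x y. smeet G x y = x \<and> smeet G y x \<noteq> y) (smeet G) (sjoin G)"
proof -
  note ax = L[unfolded lgroup_axioms_def]
  have assoc: "splus G (splus G x y) z = splus G x (splus G y z)" for x y z using ax[THEN conjunct1] by blast
  have comm: "splus G x y = splus G y x" for x y using ax[THEN conjunct2, THEN conjunct1] by blast
  have zl: "splus G (szero G) x = x" for x using ax[THEN conjunct2, THEN conjunct2, THEN conjunct1] by blast
  have lm: "splus G (sneg G x) x = szero G" for x using ax[THEN conjunct2, THEN conjunct2, THEN conjunct2, THEN conjunct1] by blast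
  have ja: "sjoin G (sjoin G x y) z = sjoin G x (sjoin G y z)" for x y z using ax[THEN conjunct2, THEN conjunct2, THEN conjunct2, THEN conjunct2, THEN conjunct1] by blast
  have ma: "smeet G (smeet G x y) z = smeet G x (smeet G y z)" for x y z using ax[THEN conjunct2, THEN conjunct2, THEN conjunct2, THEN conjunct2, THEN conjunct2, THEN conjunct1] by blast
  have jc: "sjoin G x y = sjoin G y x" for x y using ax[THEN conjunct2, THEN conjunct2, THEN conjunct2, THEN conjunct2, THEN conjunct2, THEN conjunct2, THEN conjunct1] by blast
  have mc: "smeet G x y = smeet G y x" for x y using ax[THEN conjunct2, THEN conjunct2, THEN conjunct2, THEN conjunct2, THEN conjunct2, THEN conjunct2, THEN conjunct2, THEN conjunct1] by blast
  have ab1: "sjoin G x (smeet G x y) = x" for x y using ax[THEN conjunct2, THEN conjunct2, THEN conjunct2, THEN conjunct2, THEN conjunct2, THEN conjunct2, THEN conjunct2, THEN conjunct2, THEN conjunct1] by blast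
  have ab2: "smeet G x (sjoin G x y) = x" for x y using ax[THEN conjunct2, THEN conjunct2, THEN conjunct2, THEN conjunct2, THEN conjunct2, THEN conjunct2, THEN conjunct2, THEN conjunct2, THEN conjunct2, THEN conjunct1] by blast
  have dm: "splus G x (smeet G y z) = smeet G (splus G x y) (splus G x z)" for x y z using ax[THEN conjunct2, THEN conjunct2, THEN conjunct2, THEN conjunct2, THEN conjunct2, THEN conjunct2, THEN conjunct2, THEN conjunct2, THEN conjunct2, THEN conjunct2, THEN conjunct2] by blast
  have mi: "smeet G x x = x" for x using ab1[of x x] ab2[of x "smeet G x x"] by simp
  have ji: "sjoin G x x = x" for x using ab2[of x x] ab1[of x "sjoin G x x"] by simp
  have m2j: "sjoin G y x = x" if "smeet G y x = y" for x y
    using ab1[of x y] that mc[of x y] jc[of x y] by simp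
  have j2m: "smeet G y x = y" if "sjoin G y x = x" for x y
    using ab2[of y x] that by simp
  show ?thesis
  proof (unfold_locales)
    fix a b c show "splus G (splus G a b) c = splus G a (splus G b c)" by (rule assoc)
  next
    fix a b show "splus G a b = splus G b a" by (rule comm)
  next
    fix a show "splus G (szero G) a = a" by (rule zl)
  next
    fix a show "splus G (sneg G a) a = szero G" by (rule lm)
  next
    fix a b show "splus G a (sneg G b) = splus G a (sneg G b)" by (rule refl)
  next
    fix x y show "(smeet G x y = x \<and> smeet G y x \<noteq> y) = (smeet G x y = x \<and> \<not> smeet G y x = y)" by simp
  next
    fix x show "smeet G x x = x" by (rule mi)
  next
    fix x y z assume "smeet G x y = x" "smeet G y z = y"
    then show "smeet G x z = x" by (metis ma)
  next
    fix x y assume "smeet G x y = x" "smeet G y x = y"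
    then show "x = y" by (metis mc)
  next
    fix x y show "smeet G (smeet G x y) x = smeet G x y" by (metis ma mc mi)
  next
    fix x y show "smeet G (smeet G x y) y = smeet G x y" by (metis ma mi)
  next
    fix x y z assume "smeet G x y = x" "smeet G x z = x"
    then show "smeet G x (smeet G y z) = x" by (metis ma)
  next
    fix x y show "smeet G x (sjoin G x y) = x" by (rule ab2)
  next
    fix x y show "smeet G y (sjoin G x y) = y" by (metis ab2 jc)
  next
    fix x y z assume a: "smeet G y x = y" "smeet G z x = z"
    have "sjoin G y x = x" "sjoin G z x = x" using a by (auto intro: m2j)
    then have "sjoin G (sjoin G y z) x = x" by (metis ja)
    then show "smeet G (sjoin G y z) x = sjoin G y z" by (rule j2m)
  next
    fix a b c assume "smeet G a b = a"
    then show "smeet G (splus G c a) (splus G c b) = splus G c a" by (metis dm)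
  qed
qed

lemma bridge:
  fixes G :: "'a sl_alg"
  assumes V: "in_V_slG G"
  shows "class.slg (splus G) (szero G) (\<lambda>x y. splus G x (sneg G y)) (sneg G)
     (\<lambda>x y. smeet G x y = x) (\<lambda>x y. smeet G x y = x \<and> smeet G y x \<noteq> y) (smeet G) (sjoin G) (sbv G)"
proof -
  have LG: "class.lattice_ab_group_add (splus G) (szero G) (\<lambda>x y. splus G x (sneg G y)) (sneg G)
     (\<lambda>x y. smeet G x y = x) (\<lambda>x y. smeet G x y = x \<and> smeet G y x \<noteq> y) (smeet G) (sjoin G)"
    using V unfolding in_V_slG_def by (intro bridge_lg) blast
  interpret L: lattice_ab_group_add "splus G" "szero G" "\<lambda>x y. splus G x (sneg G y)" "sneg G"
     "\<lambda>x y. smeet G x y = x" "\<lambda>x y. smeet G x y = x \<and> smeet G y x \<noteq> y" "smeet G" "sjoin G"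
    by (rule LG)
  have A1: "sbv G g f = sbv G g (\<lambda>n. smeet G (f n) g)" for g f
    using V unfolding in_V_slG_def by blast
  have A2: "sbv G g f = sjoin G (smeet G (f 0) g) (sbv G g (\<lambda>n. f (Suc n)))" for g f
    using V unfolding in_V_slG_def by blast
  have A3: "smeet G (sbv G g (\<lambda>n. smeet G (f n) h)) h = sbv G g (\<lambda>n. smeet G (f n) h)" for g h f
    using V unfolding in_V_slG_def sle_def by blast
  have upper: "smeet G (smeet G (f n) g) (sbv G g f) = smeet G (f n) g" for f n g
  proof (induct n arbitrary: f)
    case 0 show ?case by (subst A2) (rule L.sup_ge1)
  next
    case (Suc n)
    have 1: "smeet G (smeet G (f (Suc n)) g) (sbv G g (\<lambda>n. f (Suc n))) = smeet G (f (Suc n)) g"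
      using Suc[of "\<lambda>n. f (Suc n)"] by simp
    have 2: "smeet G (sbv G g (\<lambda>n. f (Suc n))) (sbv G g f) = sbv G g (\<lambda>n. f (Suc n))"
      by (subst (2) A2) (rule L.sup_ge2)
    show ?case by (rule L.order_trans[OF 1 2])
  qed
  have least: "smeet G (sbv G g f) h = sbv G g f" if H: "\<And>n. smeet G (smeet G (f n) g) h = smeet G (f n) g" for f g h
  proof -
    define f' where "f' n = smeet G (f n) g" for n
    have "(\<lambda>n. smeet G (f' n) h) = f'" unfolding f'_def using H by simp
    then have "smeet G (sbv G g f') h = sbv G g f'" using A3[of g f' h] by simp
    moreover have "sbv G g f = sbv G g f'" unfolding f'_def by (rule A1)
    ultimately show ?thesis by simp
  qed
  show ?thesis unfolding class.slg_def class.slg_axioms_def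
    using LG upper least by blast
qed



theorem mainTheorem12:
  fixes G :: "'a sl_alg"
  assumes "in_V_slG G"
  shows "\<exists>(\<theta> :: (('a \<Rightarrow> real) set \<Rightarrow> real) \<Rightarrow> (('a \<Rightarrow> real) set \<Rightarrow> real) \<Rightarrow> bool) e.
           congruence power_alg \<theta> \<and> embeds_into_quotient G power_alg \<theta> e"
proof -
  interpret S: slg "splus G" "szero G" "\<lambda>x y. splus G x (sneg G y)" "sneg G"
     "\<lambda>x y. smeet G x y = x" "\<lambda>x y. smeet G x y = x \<and> smeet G y x \<noteq> y" "smeet G" "sjoin G" "sbv G"
    by (rule bridge[OF assms])
  define decode :: "('a \<Rightarrow> real) set \<Rightarrow> 'a \<Rightarrow> real" where "decode i = (SOME \<phi>. \<phi> \<in> i)" for i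
  define bad where "bad \<iota> = {i. \<not> S.sat (decode i) \<iota>}" for \<iota>
  define N where "N A \<longleftrightarrow> (\<exists>F :: nat \<Rightarrow> 'a inst. A \<subseteq> (\<Union>n. bad (F n)))" for A
  define \<theta> :: "(('a \<Rightarrow> real) set \<Rightarrow> real) \<Rightarrow> (('a \<Rightarrow> real) set \<Rightarrow> real) \<Rightarrow> bool"
    where "\<theta> u v \<longleftrightarrow> N {i. u i \<noteq> v i}" for u v
  define e :: "'a \<Rightarrow> ('a \<Rightarrow> real) set \<Rightarrow> real" where "e x = (\<lambda>i. decode i x)" for x
  have N_mono: "N A" if "A \<subseteq> B" "N B" for A B using that unfolding N_def by blast
  have N_bad: "N (bad \<iota>)" for \<iota> unfolding N_def by (rule exI[of _ "\<lambda>_. \<iota>"]) blast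
  have N_UN: "N (\<Union>n. A n)" if H: "\<And>n. N (A n)" for A :: "nat \<Rightarrow> ('a \<Rightarrow> real) set set"
  proof -
    have ex: "\<exists>F. A n \<subseteq> (\<Union>k::nat. bad (F k))" for n using H[of n] by (simp only: N_def)
    have "\<forall>n. \<exists>F. A n \<subseteq> (\<Union>k::nat. bad (F k))" by (intro allI ex)
    from choice[OF this] obtain FF where FF0: "\<forall>n. A n \<subseteq> (\<Union>k::nat. bad (FF n k))" by blast
    define F' where "F' j = FF (fst (prod_decode j)) (snd (prod_decode j))" for j
    have "(\<Union>n. A n) \<subseteq> (\<Union>j::nat. bad (F' j))"
    proof
      fix i assume "i \<in> (\<Union>n. A n)"
      then obtain n where n: "i \<in> A n" by blast
      have "A n \<subseteq> (\<Union>k::nat. bad (FF n k))" using FF0 by blast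
      then obtain k where k: "i \<in> bad (FF n k)" using n by blast
      have "F' (prod_encode (n, k)) = FF n k" by (simp add: F'_def)
      then have "i \<in> bad (F' (prod_encode (n, k)))" using k by simp
      then show "i \<in> (\<Union>j::nat. bad (F' j))" by (rule UN_I[OF UNIV_I])
    qed
    then show ?thesis unfolding N_def by (rule exI[of _ F'])
  qed
  have N_Un: "N (A \<union> B)" if NA: "N A" and NB: "N B" for A B
  proof -
    define AB where "AB n = (if n = 0 then A else B)" for n :: nat
    have "N (\<Union>n. AB n)" by (rule N_UN) (simp add: AB_def NA NB)
    moreover have "A \<union> B \<subseteq> (\<Union>n. AB n)"
      using UN_upper[OF UNIV_I, of AB 0] UN_upper[OF UNIV_I, of AB 1] by (auto simp: AB_def)
    ultimately show ?thesis using N_mono by blast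
  qed
  have N_empty: "N {}" using N_bad[of IZ] N_mono by blast
  have cong: "congruence power_alg \<theta>"
    unfolding congruence_def
  proof (intro conjI allI impI)
    show "equivp \<theta>"
    proof (rule equivpI)
      show "reflp \<theta>" unfolding reflp_def \<theta>_def using N_empty by simp
      show "symp \<theta>" unfolding symp_def \<theta>_def by (simp add: eq_commute)
      show "transp \<theta>" unfolding transp_def \<theta>_def
      proof (intro allI impI)
        fix u v w :: "('a \<Rightarrow> real) set \<Rightarrow> real" assume "N {i. u i \<noteq> v i}" "N {i. v i \<noteq> w i}"
        then have "N ({i. u i \<noteq> v i} \<union> {i. v i \<noteq> w i})" by (rule N_Un)
        then show "N {i. u i \<noteq> w i}" by (rule N_mono[rotated]) auto
      qed
    qed
  next
    fix x x' y y' assume "\<theta> x x' \<and> \<theta> y y'"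
    then have "N ({i. x i \<noteq> x' i} \<union> {i. y i \<noteq> y' i})" unfolding \<theta>_def by (intro N_Un) auto
    then show "\<theta> (splus power_alg x y) (splus power_alg x' y')"
      and "\<theta> (sjoin power_alg x y) (sjoin power_alg x' y')"
      and "\<theta> (smeet power_alg x y) (smeet power_alg x' y')"
      unfolding \<theta>_def power_alg_def by (auto elim!: N_mono[rotated])
  next
    fix x x' assume "\<theta> x x'"
    then show "\<theta> (sneg power_alg x) (sneg power_alg x')"
      unfolding \<theta>_def power_alg_def by (auto elim!: N_mono[rotated])
  next
    fix g g' :: "('a \<Rightarrow> real) set \<Rightarrow> real" and f f' :: "nat \<Rightarrow> ('a \<Rightarrow> real) set \<Rightarrow> real"
    assume H: "\<theta> g g' \<and> (\<forall>n. \<theta> (f n) (f' n))"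
    have "N ({i. g i \<noteq> g' i} \<union> (\<Union>n. {i. f n i \<noteq> f' n i}))"
      using H unfolding \<theta>_def by (intro N_Un N_UN) auto
    moreover have "{i. sbv power_alg g f i \<noteq> sbv power_alg g' f' i} \<subseteq> {i. g i \<noteq> g' i} \<union> (\<Union>n. {i. f n i \<noteq> f' n i})"
      unfolding power_alg_def by auto
    ultimately show "\<theta> (sbv power_alg g f) (sbv power_alg g' f')"
      unfolding \<theta>_def by (rule N_mono[rotated])
  qed
  have dec: "decode {\<phi>} = \<phi>" for \<phi> unfolding decode_def by simp
  have emb: "embeds_into_quotient G power_alg \<theta> e"
    unfolding embeds_into_quotient_def
  proof (intro conjI allI)
    fix x y
    show "\<theta> (e x) (e y) = (x = y)"
    proof
      assume th: "\<theta> (e x) (e y)"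
      show "x = y"
      proof (rule ccontr)
        assume xy: "x \<noteq> y"
        obtain F :: "nat \<Rightarrow> 'a inst" where F: "{i. decode i x \<noteq> decode i y} \<subseteq> (\<Union>n. bad (F n))"
          using th unfolding \<theta>_def N_def e_def by blast
        obtain \<chi> where \<chi>: "\<chi> x \<noteq> \<chi> y" "\<And>n. S.sat \<chi> (F n)" using S.core[OF xy, of F] by blast
        have "{\<chi>} \<in> {i. decode i x \<noteq> decode i y}" using \<chi>(1) by (simp add: dec)
        then obtain n where "{\<chi>} \<in> bad (F n)" using F by blast
        then show False using \<chi>(2)[of n] unfolding bad_def by (simp add: dec)
      qed
    next
      assume "x = y" then show "\<theta> (e x) (e y)" unfolding \<theta>_def using N_empty by simp
    qed
  next
    show "\<theta> (e (szero G)) (szero power_alg)"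
      unfolding \<theta>_def e_def power_alg_def using N_bad[of IZ] by (simp add: bad_def)
  next
    fix x y show "\<theta> (e (splus G x y)) (splus power_alg (e x) (e y))"
      unfolding \<theta>_def e_def power_alg_def using N_bad[of "IP x y"] by (simp add: bad_def)
  next
    fix x show "\<theta> (e (sneg G x)) (sneg power_alg (e x))"
      unfolding \<theta>_def e_def power_alg_def using N_bad[of "IN x"] by (simp add: bad_def)
  next
    fix x y show "\<theta> (e (sjoin G x y)) (sjoin power_alg (e x) (e y))"
      unfolding \<theta>_def e_def power_alg_def using N_bad[of "IJ x y"] by (simp add: bad_def)
  next
    fix x y show "\<theta> (e (smeet G x y)) (smeet power_alg (e x) (e y))"
      unfolding \<theta>_def e_def power_alg_def using N_bad[of "IM x y"] by (simp add: bad_def)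
  next
    fix g f show "\<theta> (e (sbv G g f)) (sbv power_alg (e g) (\<lambda>n. e (f n)))"
      unfolding \<theta>_def e_def power_alg_def using N_bad[of "IS g f"] by (simp add: bad_def)
  qed
  show ?thesis using cong emb by blast
qed

end
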